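(* Let $n\ge8$, and let $d_{\rm YHZ}$ and $d_{\rm QXY}$ be as defined in the context, under the assumption stated there. Then $d_{\rm YHZ}\ge d_{\rm QXY}$.
   Context: Let $a_0,\dots,a_n$ be indeterminates, $P=\sum_{i=0}^na_ix^i$, $\boldsymbol F=(P^{(0)},\dots,P^{(n)})$ with $P^{(k)}$ the $k$-th derivative. $\mathcal M(n)$ is the set of nonincreasing tuples $\boldsymbol\mu=(\mu_1,\dots,\mu_m)$ of positive integers with sum $n$; its conjugate is $\bar{\boldsymbol\mu}=(\bar\mu_1,\bar\mu_2,\dots)$, $\bar\mu_i=\#\{j:\mu_j\ge i\}$; tuples are compared lexicographically after padding with zeros. Subresultants: for $\boldsymbol F=(F_0,\dots,F_t)$, $d_i=\deg F_i$ (formal degree), and $\boldsymbol\delta\in\mathbb{Z}_{\ge0}^t$ with $|\boldsymbol\delta|=\sum\delta_i\le d_0$, put $\delta_0=\max_{\delta_i\neq0,\,i\ge1}(d_i+\delta_i)-d_0$ if this max is $\ge d_0$, else $\delta_0=1$; $\boldsymbol M_{\boldsymbol\delta}(\boldsymbol F)$ is the $(\delta_0+|\boldsymbol\delta|)\times(\delta_0+d_0)$ matrix with rows the coefficient vectors of $x^{\delta_0-1}F_0,\dots,F_0,x^{\delta_1-1}F_1,\dots,F_1,\dots,x^{\delta_t-1}F_t,\dots,F_t$ w.r.t. $x^{\delta_0+d_0-1},\dots,1$; $R_{\boldsymbol\delta}(\boldsymbol F)=\operatorname{dp}\boldsymbol M_{\boldsymbol\delta}(\boldsymbol F)$, where for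 a $p\times q$ matrix ($p\le q$) $\operatorname{dp}\boldsymbol M=\sum_{i=0}^{q-p}\det[\boldsymbol M_1,\dots,\boldsymbol M_{p-1},\boldsymbol M_{q-i}]x^i$; $\overline{R_{\boldsymbol\delta}(\boldsymbol F)}$ is the coefficient of $x^{d_0-|\boldsymbol\delta|}$. For $\boldsymbol\delta$ of length $t\le n$, $R_{\boldsymbol\delta}(\boldsymbol F)=R_{\boldsymbol\delta}(P^{(0)},\dots,P^{(t)})$. Discriminant sequence: for $G=\sum_{i=0}^s b_ix^i$ (formal degree $s$), the discrimination matrix is the $2s\times2s$ matrix whose rows $2k-1$, $2k$ ($k=1,\dots,s$) are the coefficient vectors of $x^{s-k}G$ and $x^{s-k}G'$ w.r.t. $x^{2s-1},\dots,1$; $D_j(G)$ is its leading principal $2j\times2j$ minor. $d_{\rm YHZ}$: for $\boldsymbol\mu\in\mathcal M(n)$ let $\tilde G_0=P$, $\tilde G_i=R_{\bar\mu_i}(\tilde G_{i-1},\tilde G_{i-1}')$ ($i\ge1$) of formal degree $s_i=\sum_{k=i+1}^{\mu_1}\bar\mu_k$; $\mathcal S_{\boldsymbol\mu}$ consists of $D_j(\tilde G_i)$ for $0\le i\le\mu_1-2$, $\bar\mu_{i+1}+1\le j\le s_i$; $D_{s_{\mu_1-1}}(\tilde G_{\mu_1-1})$; and $D_j(\tilde G_i)$ for $0\le i\le\mu_1-1$, $1\le j\le\bar\mu_{i+1}$. $d_{\rm YHZ}$ is the maximal total degree in $a_0,\dots,a_n$ over $\bigcup_{\boldsymbol\mu}\mathcal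 S_{\boldsymbol\mu}$. Assumption: for every $\boldsymbol\mu$ and $0\le i\le\mu_1-1$, the coefficient of $x^{s_i}$ in $\tilde G_i$ and $\overline{R_{s_i}(\tilde G_i,\tilde G_i')}$ are not identically zero. $d_{\rm QXY}$: for $\boldsymbol\mu\in\mathcal M(n)$ let $G_0=P$, $G_i=R_{(\bar\mu_1,\dots,\bar\mu_i)}(\boldsymbol F)$ of formal degree $n-(\bar\mu_1+\dots+\bar\mu_i)$; $\mathcal T_{\boldsymbol\mu}$ consists of the coefficients of $R_{\boldsymbol\gamma}(\boldsymbol F)$ for $\boldsymbol\gamma\in\mathcal M(n)$, $\boldsymbol\gamma\succeq\bar{\boldsymbol\mu}$, and $D_j(G_i)$ for $0\le i\le\mu_1-1$, $1\le j\le\bar\mu_{i+1}$. $d_{\rm QXY}$ is the maximal total degree in $a_0,\dots,a_n$ over $\bigcup_{\boldsymbol\mu}\mathcal T_{\boldsymbol\mu}$. *)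

theory Defs
  imports "HOL-Library.Poly_Mapping" "Jordan_Normal_Form.Determinant"
begin

section \<open>Multivariate integer polynomials in the indeterminates a_0, a_1, ...\<close>

type_synonym mp = "(nat \<Rightarrow>\<^sub>0 nat) \<Rightarrow>\<^sub>0 int"

definition var :: "nat \<Rightarrow> mp" where
  "var i = Poly_Mapping.single (Poly_Mapping.single i 1) 1"

text \<open>Total degree (the zero polynomial gets degree 0).\<close>
definition total_degree :: "mp \<Rightarrow> nat" where
  "total_degree p = Max (insert 0 ((\<lambda>m. sum (Poly_Mapping.lookup m) (Poly_Mapping.keys m)) ` Poly_Mapping.keys p))"

section \<open>Univariate polynomials in x over mp, as coefficient functions
  (coefficient of x^k); formal degrees are tracked separately.\<close>

type_synonym upoly = "nat \<Rightarrow> mp"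

definition Pgen :: "nat \<Rightarrow> upoly" where
  "Pgen n k = (if k \<le> n then var k else 0)"

definition deriv :: "upoly \<Rightarrow> upoly" where
  "deriv c k = of_nat (Suc k) * c (Suc k)"

text \<open>Entry in column cl (0-based, column 0 corresponds to x^(N-1)) of the
  coefficient vector of x^j * c w.r.t. x^(N-1), ..., 1.\<close>
definition rowvec :: "upoly \<Rightarrow> nat \<Rightarrow> nat \<Rightarrow> nat \<Rightarrow> mp" where
  "rowvec c j N cl = (let e = N - 1 - cl in if j \<le> e then c (e - j) else 0)"

definition detf :: "nat \<Rightarrow> (nat \<Rightarrow> nat \<Rightarrow> mp) \<Rightarrow> mp" where
  "detf p A = det (mat p p (\<lambda>(r, k). A r k))"

text \<open>dp of a p x q matrix A (p \<le> q): coefficient of x^i is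
  det [M_1, ..., M_(p-1), M_(q-i)] for i \<le> q - p, zero otherwise.\<close>
definition dp :: "nat \<Rightarrow> nat \<Rightarrow> (nat \<Rightarrow> nat \<Rightarrow> mp) \<Rightarrow> upoly" where
  "dp p q A i = (if i \<le> q - p then
      detf p (\<lambda>r k. if k < p - 1 then A r k else A r (q - 1 - i)) else 0)"

text \<open>delta_0 for F = (F_0,...,F_t) with formal degrees ds = [d_0,...,d_t] and
  delta = [delta_1,...,delta_t].\<close>
definition delta0 :: "nat list \<Rightarrow> nat list \<Rightarrow> nat" where
  "delta0 ds \<delta> =
     (let S = {ds ! i + \<delta> ! (i - 1) | i. 1 \<le> i \<and> i \<le> length \<delta> \<and> \<delta> ! (i - 1) \<noteq> 0}
      in if S \<noteq> {} \<and> Max S \<ge> ds ! 0 then Max S - ds ! 0 else 1)"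

text \<open>Subresultant R_delta(F). Fs = [(d_0,F_0),...,(d_t,F_t)], \<delta> = [delta_1..delta_t].
  Rows: x^(delta_i - 1) F_i, ..., F_i for i = 0..t; columns x^(delta_0+d_0-1),...,1.\<close>
definition subres :: "(nat \<times> upoly) list \<Rightarrow> nat list \<Rightarrow> upoly" where
  "subres Fs \<delta> =
     (let ds = map fst Fs;
          d0 = delta0 ds \<delta>;
          dl = d0 # \<delta>;
          rows = concat (map (\<lambda>i. map (\<lambda>j. (snd (Fs ! i), dl ! i - 1 - j)) [0..<dl ! i])
                             [0..<length Fs]);
          p = length rows;
          q = d0 + ds ! 0
      in dp p q (\<lambda>r cl. rowvec (fst (rows ! r)) (snd (rows ! r)) q cl))"

definition Fs :: "nat \<Rightarrow> nat \<Rightarrow> (nat \<times> upoly) list" where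
  "Fs n t = map (\<lambda>k. (n - k, (deriv ^^ k) (Pgen n))) [0..<Suc t]"

definition RF :: "nat \<Rightarrow> nat list \<Rightarrow> upoly" where
  "RF n \<gamma> = subres (Fs n (length \<gamma>)) \<gamma>"

text \<open>D_j(G) for G of formal degree s: leading principal 2j x 2j minor of the
  2s x 2s discrimination matrix (rows 2k-1, 2k: x^(s-k) G, x^(s-k) G').\<close>
definition Dmin :: "nat \<Rightarrow> upoly \<Rightarrow> nat \<Rightarrow> mp" where
  "Dmin s G j = detf (2 * j)
     (\<lambda>r cl. rowvec (if even r then G else deriv G) (s - (r div 2 + 1)) (2 * s) cl)"

definition Mpart :: "nat \<Rightarrow> nat list set" where
  "Mpart n = {\<mu>. sorted_wrt (\<ge>) \<mu> \<and> (\<forall>x\<in>set \<mu>. 0 < x) \<and> sum_list \<mu> = n}"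

definition conj :: "nat list \<Rightarrow> nat \<Rightarrow> nat" where
  "conj \<mu> i = card {j. j < length \<mu> \<and> \<mu> ! j \<ge> i}"

definition conj_list :: "nat list \<Rightarrow> nat list" where
  "conj_list \<mu> = map (conj \<mu>) [1..<Suc (hd \<mu>)]"

definition pad :: "nat list \<Rightarrow> nat \<Rightarrow> nat" where
  "pad xs i = (if i < length xs then xs ! i else 0)"

definition lex_ge :: "nat list \<Rightarrow> nat list \<Rightarrow> bool" where
  "lex_ge xs ys \<longleftrightarrow> (\<forall>i. pad xs i = pad ys i) \<or>
     (\<exists>k. (\<forall>i<k. pad xs i = pad ys i) \<and> pad xs k > pad ys k)"

definition sdeg :: "nat list \<Rightarrow> nat \<Rightarrow> nat" where
  "sdeg \<mu> i = (\<Sum>k = Suc i..hd \<mu>. conj \<mu> k)"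

fun Gt :: "nat \<Rightarrow> nat list \<Rightarrow> nat \<Rightarrow> upoly" where
  "Gt n \<mu> 0 = Pgen n"
| "Gt n \<mu> (Suc i) =
     subres [(sdeg \<mu> i, Gt n \<mu> i), (sdeg \<mu> i - 1, deriv (Gt n \<mu> i))] [conj \<mu> (Suc i)]"

definition Sset :: "nat \<Rightarrow> nat list \<Rightarrow> mp set" where
  "Sset n \<mu> =
     {Dmin (sdeg \<mu> i) (Gt n \<mu> i) j | i j.
        i + 2 \<le> hd \<mu> \<and> conj \<mu> (i + 1) + 1 \<le> j \<and> j \<le> sdeg \<mu> i}
   \<union> {Dmin (sdeg \<mu> (hd \<mu> - 1)) (Gt n \<mu> (hd \<mu> - 1)) (sdeg \<mu> (hd \<mu> - 1))}
   \<union> {Dmin (sdeg \<mu> i) (Gt n \<mu> i) j | i j.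
        i + 1 \<le> hd \<mu> \<and> 1 \<le> j \<and> j \<le> conj \<mu> (i + 1)}"

definition d_YHZ :: "nat \<Rightarrow> nat" where
  "d_YHZ n = Max (total_degree ` (\<Union>\<mu>\<in>Mpart n. Sset n \<mu>))"

definition YHZ_assumption :: "nat \<Rightarrow> bool" where
  "YHZ_assumption n \<longleftrightarrow> (\<forall>\<mu>\<in>Mpart n. \<forall>i. i + 1 \<le> hd \<mu> \<longrightarrow>
      Gt n \<mu> i (sdeg \<mu> i) \<noteq> 0 \<and>
      subres [(sdeg \<mu> i, Gt n \<mu> i), (sdeg \<mu> i - 1, deriv (Gt n \<mu> i))] [sdeg \<mu> i] 0 \<noteq> 0)"

fun Gq :: "nat \<Rightarrow> nat list \<Rightarrow> nat \<Rightarrow> upoly" where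
  "Gq n \<mu> 0 = Pgen n"
| "Gq n \<mu> (Suc i) = RF n (take (Suc i) (conj_list \<mu>))"

definition Tset :: "nat \<Rightarrow> nat list \<Rightarrow> mp set" where
  "Tset n \<mu> =
     {RF n \<gamma> k | \<gamma> k. \<gamma> \<in> Mpart n \<and> lex_ge \<gamma> (conj_list \<mu>) \<and> k \<le> n - sum_list \<gamma>}
   \<union> {Dmin (n - sum_list (take i (conj_list \<mu>))) (Gq n \<mu> i) j | i j.
        i + 1 \<le> hd \<mu> \<and> 1 \<le> j \<and> j \<le> conj \<mu> (i + 1)}"

definition d_QXY :: "nat \<Rightarrow> nat" where
  "d_QXY n = Max (total_degree ` (\<Union>\<mu>\<in>Mpart n. Tset n \<mu>))"

end

theory Submission
  imports Defs
begin


definition degm :: "(nat \<Rightarrow>\<^sub>0 nat) \<Rightarrow> nat" where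
  "degm m = sum (Poly_Mapping.lookup m) (Poly_Mapping.keys m)"

definition homg :: "nat \<Rightarrow> mp \<Rightarrow> bool" where
  "homg h p \<longleftrightarrow> (\<forall>m\<in>Poly_Mapping.keys p. degm m = h)"

lemma degm_sup: "finite S \<Longrightarrow> Poly_Mapping.keys m \<subseteq> S \<Longrightarrow> degm m = sum (Poly_Mapping.lookup m) S"
  unfolding degm_def
  by (rule sum.mono_neutral_left) (auto simp: in_keys_iff)

lemma degm_add: "degm (a + b) = degm a + degm b"
proof -
  let ?S = "Poly_Mapping.keys a \<union> Poly_Mapping.keys b"
  have f: "finite ?S" by simp
  have "degm (a+b) = sum (Poly_Mapping.lookup (a+b)) ?S"
    by (rule degm_sup[OF f]) (rule keys_add)
  also have "\<dots> = sum (Poly_Mapping.lookup a) ?S + sum (Poly_Mapping.lookup b) ?S"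
    by (simp add: lookup_add sum.distrib)
  also have "\<dots> = degm a + degm b"
    using degm_sup[OF f, of a] degm_sup[OF f, of b] by auto
  finally show ?thesis .
qed

lemma hom_0[simp]: "homg h 0" by (simp add: homg_def)
lemma hom_add: "homg h p \<Longrightarrow> homg h q \<Longrightarrow> homg h (p + q)"
  using keys_add[of p q] unfolding homg_def by blast
lemma hom_uminus: "homg h p \<Longrightarrow> homg h (- p)"
  unfolding homg_def by simp
lemma hom_diff: "homg h p \<Longrightarrow> homg h q \<Longrightarrow> homg h (p - q)"
  using keys_diff[of p q] unfolding homg_def by blast
lemma hom_mult: "homg a p \<Longrightarrow> homg b q \<Longrightarrow> homg (a + b) (p * q)"
  using keys_mult[of p q] unfolding homg_def by (force simp: degm_add)
lemma hom_of_int: "homg 0 (of_int k :: mp)"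
proof -
  have "Poly_Mapping.keys (of_int k :: mp) \<subseteq> {0}"
    by (metis keys_single single_of_int empty_subsetI insert_subset subset_refl singletonI
        order_refl)
  then show ?thesis unfolding homg_def by (auto simp: degm_def)
qed
lemma hom_of_nat: "homg 0 (of_nat k :: mp)"
  using hom_of_int[of "int k"] by simp
lemma hom_var: "homg 1 (var i)"
  unfolding homg_def var_def degm_def by simp
lemma hom_sum: "(\<And>x. x \<in> A \<Longrightarrow> homg h (f x)) \<Longrightarrow> homg h (sum f A)"
  using keys_sum[of f A] unfolding homg_def by blast
lemma hom_prod: "finite A \<Longrightarrow> (\<And>x. x \<in> A \<Longrightarrow> homg h (f x)) \<Longrightarrow> homg (card A * h) (prod f A)"
proof (induction A rule: finite_induct)
  case empty
  then show ?case by (simp add: homg_def degm_def)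
next
  case (insert x F)
  then show ?case using hom_mult[of h "f x" "card F * h" "prod f F"] by (simp add: add.commute)
qed

lemma hom_det: "(\<And>r k. r < p \<Longrightarrow> k < p \<Longrightarrow> homg h (A r k)) \<Longrightarrow> homg (p * h) (detf p A)"
  unfolding detf_def det_def
proof (simp, rule hom_sum)
  fix x assume A: "\<And>r k. r < p \<Longrightarrow> k < p \<Longrightarrow> homg h (A r k)" and x: "x \<in> {pa. pa permutes {0..<p}}"
  have xr: "\<And>i. i < p \<Longrightarrow> x i < p" using x by (auto dest: permutes_in_image)
  have "homg (card {0..<p} * h) (\<Prod>i = 0..<p. A i (x i))"
    by (rule hom_prod) (auto intro: A xr)
  then show "homg (p * h) (of_int (sign x) * (\<Prod>i = 0..<p. A i (x i)))"
    using hom_mult[OF hom_of_int] by fastforce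
qed

lemma td_le: "homg h p \<Longrightarrow> total_degree p \<le> h"
  unfolding total_degree_def homg_def degm_def by (auto intro!: Max.boundedI)
lemma td_eq: "homg h p \<Longrightarrow> p \<noteq> 0 \<Longrightarrow> total_degree p = h"
proof -
  assume a: "homg h p" "p \<noteq> 0"
  then obtain m where "m \<in> Poly_Mapping.keys p" by (metis keys_eq_empty ex_in_conv)
  then have "h \<le> total_degree p" using a unfolding total_degree_def homg_def degm_def
    by (metis (no_types, lifting) Max_ge finite_imageI finite_insert finite_keys image_eqI insertCI)
  then show ?thesis using td_le[OF a(1)] by simp
qed

definition homc :: "nat \<Rightarrow> upoly \<Rightarrow> bool" where
  "homc h c \<longleftrightarrow> (\<forall>k. homg h (c k))"

lemma homc_Pgen: "homc 1 (Pgen n)"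
  unfolding homc_def Pgen_def using hom_var by auto

lemma homc_Pgen': "homc (Suc 0) (Pgen n)" using homc_Pgen by simp

lemma homc_deriv: "homc h c \<Longrightarrow> homc h (deriv c)"
  unfolding homc_def deriv_def using hom_mult[OF hom_of_nat] by (metis add_0)

lemma homc_derivs: "homc h c \<Longrightarrow> homc h ((deriv ^^ k) c)"
  by (induction k) (auto intro: homc_deriv)

lemma hom_rowvec: "homc h c \<Longrightarrow> homg h (rowvec c j N cl)"
  unfolding rowvec_def homc_def Let_def by auto

definition nrows :: "(nat \<times> upoly) list \<Rightarrow> nat list \<Rightarrow> nat" where
  "nrows FF \<delta> = sum_list (map (\<lambda>i. (delta0 (map fst FF) \<delta> # \<delta>) ! i) [0..<length FF])"

lemma nrows_eq: "length FF = Suc (length \<delta>) \<Longrightarrow> nrows FF \<delta> = delta0 (map fst FF) \<delta> + sum_list \<delta>"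
proof -
  assume l: "length FF = Suc (length \<delta>)"
  let ?dl = "delta0 (map fst FF) \<delta> # \<delta>"
  have "map (\<lambda>i. ?dl ! i) [0..<length FF] = ?dl"
    using l by (metis length_Cons map_nth)
  then show ?thesis unfolding nrows_def by simp
qed

lemma homc_subres:
  assumes "\<And>x. x \<in> set FF \<Longrightarrow> homc h (snd x)"
  shows "homc (nrows FF \<delta> * h) (subres FF \<delta>)"
proof -
  define dl where "dl = delta0 (map fst FF) \<delta> # \<delta>"
  define rows where "rows = concat (map (\<lambda>i. map (\<lambda>j. (snd (FF ! i), dl ! i - 1 - j)) [0..<dl ! i])
                             [0..<length FF])"
  have len: "length rows = nrows FF \<delta>"
    unfolding rows_def nrows_def dl_def by (simp add: length_concat comp_def)
  have hr: "homc h (fst (rows ! r))" if "r < length rows" for r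
  proof -
    have "rows ! r \<in> set rows" using that by simp
    then obtain i where "i < length FF" "fst (rows ! r) = snd (FF ! i)"
      unfolding rows_def by auto
    then show ?thesis using assms[of "FF ! i"] by simp
  qed
  show ?thesis
    unfolding homc_def
  proof
    fix k
    show "homg (nrows FF \<delta> * h) (subres FF \<delta> k)"
      unfolding subres_def Let_def dp_def
      apply (fold dl_def)
      apply (fold rows_def)
      apply (simp only: len)
      apply (auto intro!: hom_det hom_rowvec hr simp: len)
      done
  qed
qed

lemma hom_Dmin: "homc h G \<Longrightarrow> homg (2 * j * h) (Dmin s G j)"
  unfolding Dmin_def by (auto intro!: hom_det hom_rowvec homc_deriv)

lemma homc_RF: "homc (nrows (Fs n (length \<gamma>)) \<gamma>) (RF n \<gamma>)"
proof -
  have "homc (nrows (Fs n (length \<gamma>)) \<gamma> * 1) (subres (Fs n (length \<gamma>)) \<gamma>)"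
    by (rule homc_subres) (auto simp: Fs_def simp del: upt_Suc intro!: homc_derivs[OF homc_Pgen'])
  then show ?thesis unfolding RF_def by simp
qed




lemma delta0_two: "1 \<le> k \<Longrightarrow> 1 \<le> s \<Longrightarrow> delta0 [s, s - 1] [k] = k - 1"
proof -
  assume k: "1 \<le> k" and s: "1 \<le> s"
  have S: "{[s, s - 1] ! i + [k] ! (i - 1) | i. 1 \<le> i \<and> i \<le> length [k] \<and> [k] ! (i - 1) \<noteq> 0} = {s - 1 + k}"
    using k apply auto apply (rule_tac x=1 in exI) by auto
  show ?thesis unfolding delta0_def Let_def S using k s by auto
qed

lemma nrows_two: "1 \<le> k \<Longrightarrow> 1 \<le> s \<Longrightarrow> nrows [(s, G), (s - 1, G')] [k] = 2 * k - 1"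
  using nrows_eq[of "[(s, G), (s - 1, G')]" "[k]"] delta0_two[of k s] by simp

lemma homc_step: "homc h G \<Longrightarrow> 1 \<le> k \<Longrightarrow> 1 \<le> s \<Longrightarrow>
   homc ((2 * k - 1) * h) (subres [(s, G), (s - 1, deriv G)] [k])"
proof -
  assume a: "homc h G" "1 \<le> k" "1 \<le> s"
  have "homc (nrows [(s, G), (s - 1, deriv G)] [k] * h) (subres [(s, G), (s - 1, deriv G)] [k])"
    by (rule homc_subres) (use a in \<open>auto intro: homc_deriv\<close>)
  then show ?thesis using nrows_two[of k s G "deriv G"] a by simp
qed

lemma subres_hi: "1 \<le> k \<Longrightarrow> k \<le> s \<Longrightarrow> s - k < i \<Longrightarrow>
   subres [(s, G), (s - 1, G')] [k] i = 0"
proof -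
  assume a: "1 \<le> k" "k \<le> s" "s - k < i"
  have d: "delta0 (map fst [(s, G), (s - 1, G')]) [k] = k - 1" using delta0_two[of k s] a by simp
  show ?thesis unfolding subres_def Let_def dp_def using a d by (simp add: length_concat)
qed




definition bb :: "nat \<Rightarrow> nat" where "bb n = (n - 1) div 2"
definition aa :: "nat \<Rightarrow> nat" where "aa n = n - 1 - bb n"
definition mu0 :: "nat \<Rightarrow> nat list" where
  "mu0 n = 3 # replicate (bb n - 1) 2 @ replicate (aa n - bb n) 1"

lemma ab_facts: "8 \<le> n \<Longrightarrow> 3 \<le> bb n \<and> bb n \<le> aa n \<and> aa n \<le> bb n + 1 \<and> aa n + bb n + 1 = n"
  unfolding aa_def bb_def by auto

lemma mu0_len: "8 \<le> n \<Longrightarrow> length (mu0 n) = aa n"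
  using ab_facts[of n] unfolding mu0_def by simp

lemma mu0_nth: "8 \<le> n \<Longrightarrow> j < aa n \<Longrightarrow>
  mu0 n ! j = (if j = 0 then 3 else if j < bb n then 2 else 1)"
  using ab_facts[of n] unfolding mu0_def
  by (cases j) (auto simp: nth_append)

lemma mu0_hd: "hd (mu0 n) = 3" unfolding mu0_def by simp

lemma mu0_Mpart: "8 \<le> n \<Longrightarrow> mu0 n \<in> Mpart n"
proof -
  assume n: "8 \<le> n"
  note ab = ab_facts[OF n]
  have "sorted_wrt (\<ge>) (mu0 n)"
    unfolding sorted_wrt_iff_nth_less using mu0_nth[OF n] mu0_len[OF n] by auto
  moreover have "\<forall>x\<in>set (mu0 n). 0 < x" unfolding mu0_def by auto
  moreover have "sum_list (mu0 n) = 3 + (bb n - 1) * 2 + (aa n - bb n)" unfolding mu0_def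
    by (simp add: sum_list_replicate)
  then have "sum_list (mu0 n) = n" using ab by (simp add: diff_mult_distrib)
  ultimately show ?thesis unfolding Mpart_def by auto
qed

lemma mu0_conj: "8 \<le> n \<Longrightarrow> conj (mu0 n) 1 = aa n \<and> conj (mu0 n) 2 = bb n \<and> conj (mu0 n) 3 = 1"
proof -
  assume n: "8 \<le> n"
  note ab = ab_facts[OF n]
  have "{j. j < length (mu0 n) \<and> mu0 n ! j \<ge> 1} = {0..<aa n}"
    using mu0_nth[OF n] mu0_len[OF n] by auto
  moreover have "{j. j < length (mu0 n) \<and> mu0 n ! j \<ge> 2} = {0..<bb n}"
    using mu0_nth[OF n] mu0_len[OF n] ab by (auto split: if_splits)
  moreover have "{j. j < length (mu0 n) \<and> mu0 n ! j \<ge> 3} = {0}"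
    using mu0_nth[OF n] mu0_len[OF n] ab by (auto split: if_splits)
  ultimately show ?thesis unfolding conj_def by simp
qed

lemma mu0_sdeg: "8 \<le> n \<Longrightarrow> sdeg (mu0 n) 0 = n \<and> sdeg (mu0 n) 1 = bb n + 1 \<and> sdeg (mu0 n) 2 = 1"
  using mu0_conj[of n] ab_facts[of n] unfolding sdeg_def mu0_hd
  by (simp add: numeral_3_eq_3 numeral_2_eq_2)

lemma lower:
  assumes n: "8 \<le> n" and A: "YHZ_assumption n"
  shows "Dmin (sdeg (mu0 n) 2) (Gt n (mu0 n) 2) 1 \<in> Sset n (mu0 n)"
    and "total_degree (Dmin (sdeg (mu0 n) 2) (Gt n (mu0 n) 2) 1) = 2 * ((2 * bb n - 1) * ((2 * aa n - 1) * 1))"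
proof -
  note ab = ab_facts[OF n]
  note cj = mu0_conj[OF n]
  note sd = mu0_sdeg[OF n]
  show "Dmin (sdeg (mu0 n) 2) (Gt n (mu0 n) 2) 1 \<in> Sset n (mu0 n)"
  proof -
    have "\<exists>i j. Dmin (sdeg (mu0 n) 2) (Gt n (mu0 n) 2) 1 = Dmin (sdeg (mu0 n) i) (Gt n (mu0 n) i) j \<and>
        i + 1 \<le> hd (mu0 n) \<and> 1 \<le> j \<and> j \<le> conj (mu0 n) (i + 1)"
      by (rule exI[of _ 2], rule exI[of _ 1]) (use cj mu0_hd[of n] in \<open>simp del: Gt.simps\<close>)
    then show ?thesis unfolding Sset_def by (intro UnI2) (simp del: Gt.simps)
  qed
  define G1 where "G1 = Gt n (mu0 n) 1"
  define G2 where "G2 = Gt n (mu0 n) 2"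
  have G1: "G1 = subres [(n, Pgen n), (n - 1, deriv (Pgen n))] [aa n]"
    unfolding G1_def using cj sd by (simp add: numeral_2_eq_2)
  have G2: "G2 = subres [(bb n + 1, G1), (bb n + 1 - 1, deriv G1)] [bb n]"
    unfolding G2_def G1_def using cj sd by (simp add: numeral_2_eq_2)
  have h1: "homc ((2 * aa n - 1) * 1) G1" unfolding G1
    by (rule homc_step) (use ab homc_Pgen in auto)
  have h2: "homc ((2 * bb n - 1) * ((2 * aa n - 1) * 1)) G2" unfolding G2
    by (rule homc_step[OF h1]) (use ab in auto)
  have z: "G2 2 = 0" unfolding G2 by (rule subres_hi) (use ab in auto)
  have D: "Dmin 1 G2 1 = G2 1 * G2 1"
  proof -
    let ?M = "mat 2 2 (\<lambda>(r, k). rowvec (if even r then G2 else deriv G2) (1 - (r div 2 + 1)) (2 * 1) k)"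
    have ut: "upper_triangular ?M"
      unfolding upper_triangular_def
    proof (intro allI impI)
      fix i j assume "i < dim_row ?M" "j < i"
      then have ij: "i = 1" "j = 0" by auto
      show "?M $$ (i, j) = 0" using z unfolding ij by (simp add: rowvec_def deriv_def numeral_2_eq_2)
    qed
    have "det ?M = prod_list (diag_mat ?M)"
      by (rule det_upper_triangular[OF ut, of 2]) simp
    also have "\<dots> = G2 1 * G2 1"
      by (simp add: diag_mat_def rowvec_def deriv_def upt_rec)
    finally show ?thesis unfolding Dmin_def detf_def by simp
  qed
  have nz: "G2 1 \<noteq> 0" using A mu0_Mpart[OF n] sd mu0_hd[of n]
    unfolding YHZ_assumption_def G2_def by force
  have "homg (((2 * bb n - 1) * ((2 * aa n - 1) * 1)) + ((2 * bb n - 1) * ((2 * aa n - 1) * 1))) (G2 1 * G2 1)"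
    using h2 unfolding homc_def by (blast intro: hom_mult)
  then have "total_degree (G2 1 * G2 1) = 2 * ((2 * bb n - 1) * ((2 * aa n - 1) * 1))"
    using td_eq nz by (metis mult_2 no_zero_divisors)
  then show "total_degree (Dmin (sdeg (mu0 n) 2) (Gt n (mu0 n) 2) 1) = 2 * ((2 * bb n - 1) * ((2 * aa n - 1) * 1))"
    using D sd unfolding G2_def by simp
qed




lemma Mpart_props: "\<mu> \<in> Mpart n \<Longrightarrow> sorted_wrt (\<ge>) \<mu> \<and> (\<forall>x\<in>set \<mu>. 0 < x) \<and> sum_list \<mu> = n"
  unfolding Mpart_def by auto

lemma len_le_sum: "\<forall>x\<in>set xs. 0 < (x::nat) \<Longrightarrow> length xs \<le> sum_list xs"
  by (induction xs) auto

lemma finite_Mpart: "finite (Mpart n)"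
proof -
  have "Mpart n \<subseteq> {xs. set xs \<subseteq> {..n} \<and> length xs \<le> n}"
  proof
    fix xs assume "xs \<in> Mpart n"
    then have p: "\<forall>x\<in>set xs. 0 < x" "sum_list xs = n" unfolding Mpart_def by auto
    then show "xs \<in> {xs. set xs \<subseteq> {..n} \<and> length xs \<le> n}"
      using len_le_sum[OF p(1)] member_le_sum_list[of _ xs] by auto
  qed
  then show ?thesis using finite_lists_length_le[of "{..n}" n] finite_subset by blast
qed

lemma conj_mono: "k \<le> k' \<Longrightarrow> conj \<mu> k' \<le> conj \<mu> k"
  unfolding conj_def by (rule card_mono) auto

lemma conj_le_len: "conj \<mu> k \<le> length \<mu>"
  unfolding conj_def using card_mono[of "{..<length \<mu>}" "{j. j < length \<mu> \<and> k \<le> \<mu> ! j}"] by auto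

lemma conj_1: "\<forall>x\<in>set \<mu>. 0 < x \<Longrightarrow> conj \<mu> 1 = length \<mu>"
  unfolding conj_def
proof -
  assume "\<forall>x\<in>set \<mu>. 0 < x"
  then have "{j. j < length \<mu> \<and> 1 \<le> \<mu> ! j} = {..<length \<mu>}"
    by (auto simp: Suc_le_eq)
  then show "card {j. j < length \<mu> \<and> 1 \<le> \<mu> ! j} = length \<mu>" by simp
qed

lemma conj_as_sum: "conj \<mu> k = (\<Sum>j<length \<mu>. if k \<le> \<mu> ! j then 1 else 0)"
proof -
  have "conj \<mu> k = card {j \<in> {..<length \<mu>}. k \<le> \<mu> ! j}" unfolding conj_def
    by (rule arg_cong[where f=card]) auto
  also have "\<dots> = (\<Sum>j\<in>{j \<in> {..<length \<mu>}. k \<le> \<mu> ! j}. 1)" by simp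
  also have "\<dots> = (\<Sum>j<length \<mu>. if k \<le> \<mu> ! j then 1 else 0)"
    by (rule sum.inter_filter) simp
  finally show ?thesis .
qed

lemma conj_sum: "(\<Sum>k = 1..m. conj \<mu> k) \<le> sum_list \<mu>"
proof -
  have "(\<Sum>k = 1..m. conj \<mu> k) = (\<Sum>k = 1..m. \<Sum>j<length \<mu>. if k \<le> \<mu> ! j then 1 else 0)"
    by (simp add: conj_as_sum)
  also have "\<dots> = (\<Sum>j<length \<mu>. \<Sum>k = 1..m. if k \<le> \<mu> ! j then 1 else 0)"
    by (rule sum.swap)
  also have "\<dots> \<le> (\<Sum>j<length \<mu>. \<mu> ! j)"
  proof (rule sum_mono)
    fix j
    have "(\<Sum>k = 1..m. if k \<le> \<mu> ! j then 1 else 0) = card {k \<in> {1..m}. k \<le> \<mu> ! j}"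
      by (simp add: sum.inter_filter[symmetric])
    also have "\<dots> \<le> card {1..\<mu> ! j}" by (rule card_mono) auto
    finally show "(\<Sum>k = 1..m. if k \<le> \<mu> ! j then 1 else 0::nat) \<le> \<mu> ! j" by simp
  qed
  also have "\<dots> = sum_list \<mu>" by (simp add: sum_list_sum_nth atLeast0LessThan)
  finally show ?thesis .
qed




lemma ar0: "8 \<le> n \<Longrightarrow> \<exists>m. (n = 2*m+1 \<and> bb n = m \<and> aa n = m) \<or> (n = 2*m+2 \<and> bb n = m \<and> aa n = m+1)"
proof -
  assume n: "8 \<le> n"
  define m where "m = (n - 1) div 2"
  have "n - 1 = 2*m \<or> n - 1 = 2*m+1" unfolding m_def by linarith
  then show ?thesis unfolding aa_def bb_def m_def[symmetric] using n by (intro exI[of _ m]) auto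
qed

lemma t1: fixes N C T :: int assumes "T + C \<le> N" "0 \<le> C" shows "2*C*(2*T-1) \<le> 2*C*(2*N-2*C-1)"
    by (rule mult_left_mono) (use assms in auto)
lemma t2: fixes N C T :: int shows "4*(2*C*(2*N-2*C-1)) + (2*N-1-4*C)^2 = (2*N-1)^2" by (simp add: algebra_simps power2_eq_square)
lemma t3: fixes M R N :: int assumes "3 \<le> M" "N = 2*M+1 \<and> R = 2*(2*M-1)*(2*M-1)" shows "4*R - (2*N-1)^2 = 16*(M*(M-3)) + 8*M + 7"
  using assms by (simp add: algebra_simps power2_eq_square)
lemma t4: fixes A B R P Q :: int assumes  "A \<le> B" "4*B + Q = P" "P \<le> 4*R" "0 \<le> Q" shows "A \<le> R" using assms by linarith
lemma t3': fixes M R N :: int assumes "3 \<le> M" "N = 2*M+2 \<and> R = 2*(2*M-1)*(2*M+1)" shows "4*R - (2*N-1)^2 = 16*(M*(M-3)) + 24*M - 17"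
  using assms by (simp add: algebra_simps power2_eq_square)

lemma ar_int: fixes N C T M :: int
  assumes "T + C \<le> N" "0 \<le> C" "1 \<le> T" "3 \<le> M"
    and "(N = 2*M+1 \<and> R = 2*(2*M-1)*(2*M-1)) \<or> (N = 2*M+2 \<and> R = 2*(2*M-1)*(2*M+1))"
  shows "2*C*(2*T-1) \<le> R"
proof -
  have mm: "0 \<le> M*(M-3)" using assms(4) by (intro mult_nonneg_nonneg) auto
  have s3: "(2*N-1)^2 \<le> 4*R"
    using assms(5)
  proof
    assume h: "N = 2*M+1 \<and> R = 2*(2*M-1)*(2*M-1)"
    from t3[OF assms(4) h] show ?thesis using mm assms(4) by linarith
  next
    assume h: "N = 2*M+2 \<and> R = 2*(2*M-1)*(2*M+1)"
    from t3'[OF assms(4) h] show ?thesis using mm assms(4) by linarith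
  qed
  have s0: "0 \<le> (2*N-1-4*C)^2" by simp
  show ?thesis by (rule t4[OF t1[OF assms(1,2)] t2 s3 s0])
qed

lemma ar2: "8 \<le> n \<Longrightarrow> S + c \<le> n \<Longrightarrow> 1 \<le> S \<Longrightarrow> 2*c*(2*S-1) \<le> 2 * ((2 * bb n - 1) * ((2 * aa n - 1) * 1))"
proof -
  assume a: "8 \<le> n" "S + c \<le> n" "1 \<le> S"
  from ar0[OF a(1)] obtain m where m: "(n = 2*m+1 \<and> bb n = m \<and> aa n = m) \<or> (n = 2*m+2 \<and> bb n = m \<and> aa n = m+1)" by blast
  have m3: "3 \<le> m" using m a by auto
  have L: "2*int c*(2*int S-1) \<le> 2 * ((2 * int (bb n) - 1) * ((2 * int (aa n) - 1) * 1))"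
  proof (rule ar_int[where N="int n" and M="int m"])
    show "(int n = 2*int m+1 \<and> 2 * ((2 * int (bb n) - 1) * ((2 * int (aa n) - 1) * 1)) = 2*(2*int m-1)*(2*int m-1)) \<or>
          (int n = 2*int m+2 \<and> 2 * ((2 * int (bb n) - 1) * ((2 * int (aa n) - 1) * 1)) = 2*(2*int m-1)*(2*int m+1))"
      using m by (auto simp: algebra_simps)
  qed (use a m3 in auto)
  have E1: "int (2*c*(2*S-1)) = 2*int c*(2*int S-1)" using a by (simp add: of_nat_diff)
  have E2: "int (2 * ((2 * bb n - 1) * ((2 * aa n - 1) * 1))) = 2 * ((2 * int (bb n) - 1) * ((2 * int (aa n) - 1) * 1))"
  proof -
    have b1: "1 \<le> bb n" "1 \<le> aa n" using m m3 by auto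
    have e1: "int (2 * bb n - 1) = 2 * int (bb n) - 1" using b1 by (simp add: of_nat_diff)
    have e2: "int (2 * aa n - 1) = 2 * int (aa n) - 1" using b1 by (simp add: of_nat_diff)
    show ?thesis by (simp only: of_nat_mult e1 e2 of_nat_numeral of_nat_1)
  qed
  have "int (2*c*(2*S-1)) \<le> int (2 * ((2 * bb n - 1) * ((2 * aa n - 1) * 1)))"
    unfolding E1 E2 by (rule L)
  then show ?thesis by (rule of_nat_le_iff[THEN iffD1])
qed

lemma ar1: "8 \<le> n \<Longrightarrow> 2*n \<le> 2 * ((2 * bb n - 1) * ((2 * aa n - 1) * 1))"
proof -
  assume a: "8 \<le> n"
  have h1: "n - 1 + 1 \<le> n" "1 \<le> n - 1" using a by auto
  have "2*1*(2*(n-1)-1) \<le> 2 * ((2 * bb n - 1) * ((2 * aa n - 1) * 1))" by (rule ar2[OF a h1])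
  moreover have "2*n \<le> 2*1*(2*(n-1)-1)" using a by linarith
  ultimately show ?thesis by linarith
qed

lemma delta0_RF:
  assumes ne: "\<delta> \<noteq> []" and d0: "1 \<le> \<delta> ! 0" and L: "\<forall>x\<in>set \<delta>. x \<le> L" and n: "1 \<le> n"
  shows "delta0 (map fst (Fs n (length \<delta>))) \<delta> \<le> L - 1"
proof -
  define ds where "ds = map fst (Fs n (length \<delta>))"
  have dsi: "\<And>i. i \<le> length \<delta> \<Longrightarrow> ds ! i = n - i"
    unfolding ds_def Fs_def by (simp del: upt_Suc add: nth_append)
  define S where "S = {ds ! i + \<delta> ! (i - 1) | i. 1 \<le> i \<and> i \<le> length \<delta> \<and> \<delta> ! (i - 1) \<noteq> 0}"
  have mem: "n - 1 + \<delta> ! 0 \<in> S"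
  proof -
    have l1: "1 \<le> length \<delta>" using ne by (cases \<delta>) auto
    show ?thesis unfolding S_def using l1 d0 dsi[OF l1] by (intro CollectI exI[of _ 1]) auto
  qed
  have bnd: "\<And>x. x \<in> S \<Longrightarrow> x \<le> n - 1 + L"
  proof -
    fix x assume "x \<in> S"
    then obtain i where i: "1 \<le> i" "i \<le> length \<delta>" "x = ds ! i + \<delta> ! (i - 1)" unfolding S_def by auto
    have "\<delta> ! (i - 1) \<in> set \<delta>" using i by auto
    then have "\<delta> ! (i - 1) \<le> L" using L by auto
    then show "x \<le> n - 1 + L" using i dsi[of i] by auto
  qed
  have fin: "finite S" using bnd by (meson finite_atMost finite_subset subsetI atMost_iff)
  have mx: "n - 1 + \<delta> ! 0 \<le> Max S" using Max_ge[OF fin mem] .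
  have mx2: "Max S \<le> n - 1 + L" using bnd Max_in[OF fin] mem by blast
  have "ds ! 0 = n" using dsi[of 0] by simp
  then have "delta0 ds \<delta> = Max S - n" unfolding delta0_def Let_def S_def[symmetric]
    using mem mx d0 n by auto
  then show ?thesis using mx2 n unfolding ds_def by linarith
qed

lemma homc_RF': "homc (delta0 (map fst (Fs n (length \<gamma>))) \<gamma> + sum_list \<gamma>) (RF n \<gamma>)"
  using homc_RF[of n \<gamma>] nrows_eq[of "Fs n (length \<gamma>)" \<gamma>] by (simp add: Fs_def)




abbreviation BB :: "nat \<Rightarrow> nat" where "BB n \<equiv> 2 * ((2 * bb n - 1) * ((2 * aa n - 1) * 1))"

lemma fin_pat: "finite {f i j | i j. i < (a::nat) \<and> (j::nat) \<le> g i \<and> Q i j}"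
  by (rule finite_subset[of _ "\<Union>i<a. (f i) ` {..g i}"]) auto

lemma finite_Sset: "finite (Sset n \<mu>)"
proof -
  have A: "{Dmin (sdeg \<mu> i) (Gt n \<mu> i) j | i j. i + 2 \<le> hd \<mu> \<and> conj \<mu> (i + 1) + 1 \<le> j \<and> j \<le> sdeg \<mu> i}
     \<subseteq> {Dmin (sdeg \<mu> i) (Gt n \<mu> i) j | i j. i < hd \<mu> \<and> j \<le> sdeg \<mu> i \<and> True}"
    by (intro subsetI, elim CollectE exE conjE, intro CollectI exI conjI) (assumption | simp)+
  have B: "{Dmin (sdeg \<mu> i) (Gt n \<mu> i) j | i j. i + 1 \<le> hd \<mu> \<and> 1 \<le> j \<and> j \<le> conj \<mu> (i + 1)}
     \<subseteq> {Dmin (sdeg \<mu> i) (Gt n \<mu> i) j | i j. i < hd \<mu> \<and> j \<le> conj \<mu> (i + 1) \<and> True}"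
    by (intro subsetI, elim CollectE exE conjE, intro CollectI exI conjI) (assumption | simp)+
  show ?thesis unfolding Sset_def
    by (intro finite_UnI finite_subset[OF A fin_pat] finite_subset[OF B fin_pat] finite.insertI finite.emptyI)
qed

lemma finite_Tset: "finite (Tset n \<mu>)"
proof -
  have A: "{RF n \<gamma> k | \<gamma> k. \<gamma> \<in> Mpart n \<and> lex_ge \<gamma> (conj_list \<mu>) \<and> k \<le> n - sum_list \<gamma>}
     \<subseteq> (\<lambda>(\<gamma>, k). RF n \<gamma> k) ` (Mpart n \<times> {..n})"
  proof
    fix x assume "x \<in> {RF n \<gamma> k | \<gamma> k. \<gamma> \<in> Mpart n \<and> lex_ge \<gamma> (conj_list \<mu>) \<and> k \<le> n - sum_list \<gamma>}"
    then obtain \<gamma> k where "x = RF n \<gamma> k" "\<gamma> \<in> Mpart n" "k \<le> n - sum_list \<gamma>" by blast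
    then show "x \<in> (\<lambda>(\<gamma>, k). RF n \<gamma> k) ` (Mpart n \<times> {..n})"
      by (intro image_eqI[of _ _ "(\<gamma>, k)"]) auto
  qed
  have A2: "finite ((\<lambda>(\<gamma>, k). RF n \<gamma> k) ` (Mpart n \<times> {..n}))"
    using finite_Mpart by simp
  have B: "{Dmin (n - sum_list (take i (conj_list \<mu>))) (Gq n \<mu> i) j | i j.
        i + 1 \<le> hd \<mu> \<and> 1 \<le> j \<and> j \<le> conj \<mu> (i + 1)}
     \<subseteq> {Dmin (n - sum_list (take i (conj_list \<mu>))) (Gq n \<mu> i) j | i j. i < hd \<mu> \<and> j \<le> conj \<mu> (i + 1) \<and> True}"
    by (intro subsetI, elim CollectE exE conjE, intro CollectI exI conjI) (assumption | simp)+
  show ?thesis unfolding Tset_def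
    by (intro finite_UnI finite_subset[OF A A2] finite_subset[OF B fin_pat])
qed

lemma bound_RF:
  assumes n: "8 \<le> n" and g: "\<gamma> \<in> Mpart n"
  shows "total_degree (RF n \<gamma> k) \<le> BB n"
proof -
  have p: "\<forall>x\<in>set \<gamma>. 0 < x" "sum_list \<gamma> = n" using g unfolding Mpart_def by auto
  have ne: "\<gamma> \<noteq> []" using p n by auto
  have d0: "1 \<le> \<gamma> ! 0" using p(1) ne by (cases \<gamma>) auto
  have L: "\<forall>x\<in>set \<gamma>. x \<le> n" using p(2) member_le_sum_list by blast
  have "delta0 (map fst (Fs n (length \<gamma>))) \<gamma> \<le> n - 1" by (rule delta0_RF[OF ne d0 L]) (use n in auto)
  moreover have "total_degree (RF n \<gamma> k) \<le> delta0 (map fst (Fs n (length \<gamma>))) \<gamma> + sum_list \<gamma>"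
    using homc_RF'[of n \<gamma>] td_le unfolding homc_def by blast
  ultimately have "total_degree (RF n \<gamma> k) \<le> 2 * n" using p by linarith
  then show ?thesis using ar1[OF n] by linarith
qed

lemma conj_list_take: "i \<le> hd \<mu> \<Longrightarrow> take i (conj_list \<mu>) = map (conj \<mu>) [1..<Suc i]"
  unfolding conj_list_def by (simp add: take_map take_upt del: upt_Suc)

lemma bound_D:
  assumes n: "8 \<le> n" and mu: "\<mu> \<in> Mpart n" and i: "i + 1 \<le> hd \<mu>" and j: "j \<le> conj \<mu> (i + 1)"
  shows "total_degree (Dmin s (Gq n \<mu> i) j) \<le> BB n"
proof -
  have p: "\<forall>x\<in>set \<mu>. 0 < x" "sum_list \<mu> = n" using mu unfolding Mpart_def by auto
  have lenle: "length \<mu> \<le> n" using len_le_sum[OF p(1)] p(2) by simp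
  have c1: "conj \<mu> 1 = length \<mu>" by (rule conj_1[OF p(1)])
  show ?thesis
  proof (cases i)
    case 0
    have "homg (2 * j * 1) (Dmin s (Gq n \<mu> i) j)"
      using 0 hom_Dmin[OF homc_Pgen, of j s] by simp
    then have "total_degree (Dmin s (Gq n \<mu> i) j) \<le> 2 * j" using td_le by fastforce
    moreover have "j \<le> n" using j 0 c1 lenle by simp
    ultimately show ?thesis using ar1[OF n] by linarith
  next
    case (Suc i')
    define \<delta> where "\<delta> = map (conj \<mu>) [1..<Suc i]"
    have G: "Gq n \<mu> i = RF n \<delta>" unfolding \<delta>_def Suc using conj_list_take[of "Suc i'" \<mu>] i Suc by simp
    define L where "L = length \<mu>"
    define S where "S = sum_list \<delta>"
    define c where "c = conj \<mu> (i + 1)"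
    have ne: "\<delta> \<noteq> []" unfolding \<delta>_def Suc by simp
    have dz: "\<delta> ! 0 = L" unfolding \<delta>_def L_def Suc using c1 by (simp add: nth_Cons' del: upt_Suc)
    have Lpos: "1 \<le> L" unfolding L_def using i p(2) n
      by (cases \<mu>) auto
    have Lb: "\<forall>x\<in>set \<delta>. x \<le> L" unfolding \<delta>_def L_def using conj_mono[of 1 _ \<mu>] c1 by auto
    have dl: "delta0 (map fst (Fs n (length \<delta>))) \<delta> \<le> L - 1"
      by (rule delta0_RF[OF ne _ Lb]) (use dz Lpos n in auto)
    have inS: "\<delta> ! 0 \<in> set \<delta>" using ne by simp
    have LS: "L \<le> S" unfolding S_def using member_le_sum_list[OF inS] dz by simp
    have Ssum: "S = (\<Sum>k = 1..i. conj \<mu> k)" unfolding S_def \<delta>_def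
      by (simp only: sum_set_upt_conv_sum_list_nat[symmetric] set_upt atLeastLessThanSuc_atLeastAtMost)
    have Sc: "S + c \<le> n" using conj_sum[where m="i+1" and \<mu>=\<mu>] p(2) unfolding Ssum c_def by simp
    have h: "homg (2 * j * (delta0 (map fst (Fs n (length \<delta>))) \<delta> + S)) (Dmin s (Gq n \<mu> i) j)"
      unfolding G S_def by (rule hom_Dmin[OF homc_RF'])
    have "2 * j * (delta0 (map fst (Fs n (length \<delta>))) \<delta> + S) \<le> 2 * c * (2 * S - 1)"
    proof -
      have "delta0 (map fst (Fs n (length \<delta>))) \<delta> + S \<le> 2 * S - 1" using dl LS Lpos by linarith
      moreover have "2 * j \<le> 2 * c" using j c_def by simp
      ultimately show ?thesis by (intro mult_mono) auto
    qed
    also have "\<dots> \<le> BB n" by (rule ar2[OF n Sc]) (use LS Lpos in auto)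
    finally show ?thesis using td_le[OF h] by linarith
  qed
qed

theorem mainTheorem8:
  fixes n :: nat
  assumes "8 \<le> n"
    and "YHZ_assumption n"
  shows "d_YHZ n \<ge> d_QXY n"
proof -
  let ?U = "\<Union>\<mu>\<in>Mpart n. Tset n \<mu>"
  let ?V = "\<Union>\<mu>\<in>Mpart n. Sset n \<mu>"
  have finU: "finite ?U" using finite_Mpart finite_Tset by blast
  have finV: "finite ?V" using finite_Mpart finite_Sset by blast
  have ub: "\<And>x. x \<in> ?U \<Longrightarrow> total_degree x \<le> BB n"
  proof -
    fix x assume "x \<in> ?U"
    then obtain \<mu> where mu: "\<mu> \<in> Mpart n" and x: "x \<in> Tset n \<mu>" by blast
    from x show "total_degree x \<le> BB n" unfolding Tset_def
    proof (elim UnE)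
      assume "x \<in> {RF n \<gamma> k | \<gamma> k. \<gamma> \<in> Mpart n \<and> lex_ge \<gamma> (conj_list \<mu>) \<and> k \<le> n - sum_list \<gamma>}"
      then obtain \<gamma> k where "x = RF n \<gamma> k" "\<gamma> \<in> Mpart n" by blast
      then show ?thesis using bound_RF[OF assms(1)] by blast
    next
      assume "x \<in> {Dmin (n - sum_list (take i (conj_list \<mu>))) (Gq n \<mu> i) j | i j.
        i + 1 \<le> hd \<mu> \<and> 1 \<le> j \<and> j \<le> conj \<mu> (i + 1)}"
      then obtain i j where "x = Dmin (n - sum_list (take i (conj_list \<mu>))) (Gq n \<mu> i) j"
        "i + 1 \<le> hd \<mu>" "j \<le> conj \<mu> (i + 1)" by blast
      then show ?thesis using bound_D[OF assms(1) mu] by blast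
    qed
  qed
  have ne: "?U \<noteq> {}"
  proof -
    have "Dmin (n - sum_list (take 0 (conj_list (mu0 n)))) (Gq n (mu0 n) 0) 1 \<in> Tset n (mu0 n)"
      unfolding Tset_def using mu0_conj[OF assms(1)] mu0_hd[of n] ab_facts[OF assms(1)]
      by (intro UnI2 CollectI exI[of _ 0] exI[of _ 1]) simp
    then show ?thesis using mu0_Mpart[OF assms(1)] by blast
  qed
  have "d_QXY n \<le> BB n" unfolding d_QXY_def
    using finU ne ub by (simp add: Max_le_iff)
  also have "BB n = total_degree (Dmin (sdeg (mu0 n) 2) (Gt n (mu0 n) 2) 1)"
    using lower(2)[OF assms] by simp
  also have "\<dots> \<le> d_YHZ n" unfolding d_YHZ_def
    using lower(1)[OF assms] mu0_Mpart[OF assms(1)] finV by (intro Max_ge) auto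
  finally show ?thesis .
qed


end
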